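(* Let $q\ge 2$ be even, let $m\ge 2$ and $n$ be integers, and let $\boldsymbol{x}\in\Sigma_q^n$ be an $m$-RCD root. If $\boldsymbol{y}=RC_{k,i}(\boldsymbol{x})$ for some integer $k\ge 3m-3$ and some position $i\in[1,n-k+1]$, then $\boldsymbol{y}_{[i+k,i+2k-1]}=\boldsymbol{y}_{[i,i+k-1]}^{RC}$, and $\boldsymbol{y}_{[j+k,j+2k-1]}\neq \boldsymbol{y}_{[j,j+k-1]}^{RC}$ for every integer $j$ with $1\le j<i$.
   Context: $\Sigma_q=\{0,1,\dots,q-1\}$, and $[a,b]=\{a,a+1,\dots,b\}$ (empty if $a>b$). For $\boldsymbol{x}=x_1\cdots x_n$, $\boldsymbol{x}_{[a,b]}=x_a\cdots x_b$. A complement operation is a fixed bijection $a\mapsto\overline{a}$ on $\Sigma_q$ with $\overline{a}\ne a$ and $\overline{\overline{a}}=a$ for all $a$ (so $q$ is even). For $\boldsymbol{x}=x_1\cdots x_n$, its reverse-complement is $\boldsymbol{x}^{RC}=\overline{x_n}\,\overline{x_{n-1}}\cdots\overline{x_1}$. For $\boldsymbol{x}=\boldsymbol{u}\boldsymbol{v}\boldsymbol{w}$ with $|\boldsymbol{u}|=i-1$, $|\boldsymbol{v}|=k$, the $k$-reverse-complement duplication at position $i$ gives $RC_{k,i}(\boldsymbol{x})=\boldsymbol{u}\boldsymbol{v}\boldsymbol{v}^{RC}\boldsymbol{w}$. A string $\boldsymbol{x}\in\Sigma_q^n$ is an $m$-RCD root if $\boldsymbol{x}_{[i+m,i+2m-1]}\ne\boldsymbol{x}_{[i,i+m-1]}^{RC}$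 for every $i\in[1,n-2m+1]$. *)

theory Defs
  imports Main
begin

text \<open>Strings over \<Sigma>_q are lists of naturals with all entries < q.
  Positions are 1-indexed as in the paper.\<close>

definition is_complement :: "nat \<Rightarrow> (nat \<Rightarrow> nat) \<Rightarrow> bool" where
  "is_complement q c \<longleftrightarrow> (\<forall>a<q. c a < q \<and> c a \<noteq> a \<and> c (c a) = a)"

text \<open>x_[a,b] = x_a ... x_b (empty if a > b), for a \<ge> 1.\<close>
definition substr :: "'a list \<Rightarrow> nat \<Rightarrow> nat \<Rightarrow> 'a list" where
  "substr x a b = take (Suc b - a) (drop (a - 1) x)"

definition revcomp :: "(nat \<Rightarrow> nat) \<Rightarrow> nat list \<Rightarrow> nat list" where
  "revcomp c x = map c (rev x)"

text \<open>RC_{k,i}(x) = u v v^RC w with |u| = i-1, |v| = k.\<close>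
definition RCdup :: "(nat \<Rightarrow> nat) \<Rightarrow> nat \<Rightarrow> nat \<Rightarrow> nat list \<Rightarrow> nat list" where
  "RCdup c k i x = take (i - 1) x @ substr x i (i + k - 1)
                   @ revcomp c (substr x i (i + k - 1)) @ drop (i + k - 1) x"

definition RCD_root :: "(nat \<Rightarrow> nat) \<Rightarrow> nat \<Rightarrow> nat list \<Rightarrow> bool" where
  "RCD_root c m x \<longleftrightarrow> (\<forall>i. 1 \<le> i \<and> i + 2*m - 1 \<le> length x \<longrightarrow>
      substr x (i + m) (i + 2*m - 1) \<noteq> revcomp c (substr x i (i + m - 1)))"

end

theory Submission
  imports Defs
begin

lemma pal_iff:
  assumes "1 \<le> a" "a + 2*L - 1 \<le> length z"
  shows "substr z (a+L) (a+2*L-1) = revcomp c (substr z a (a+L-1)) \<longleftrightarrow>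
         (\<forall>s<L. z!(a-1+L+s) = c (z!(a-1+L-1-s)))"
proof -
  have e1: "substr z (a+L) (a+2*L-1) = take L (drop (a-1+L) z)"
    unfolding substr_def using assms(1) by (cases L) (auto simp: algebra_simps)
  have e2: "substr z a (a+L-1) = take L (drop (a-1) z)"
    unfolding substr_def using assms(1) by (cases L) auto
  show ?thesis unfolding e1 e2 revcomp_def
    using assms by (auto simp: list_eq_iff_nth_eq rev_nth algebra_simps)
qed

lemma substr_len:
  assumes "1 \<le> a" "a + L - 1 \<le> length z"
  shows "substr z a (a+L-1) = take L (drop (a-1) z)"
  unfolding substr_def using assms by (cases L) auto

theorem lemma1:
  fixes q m n k i :: nat and c :: "nat \<Rightarrow> nat" and x y :: "nat list"
  assumes "q \<ge> 2" and "even q" and "is_complement q c"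
    and "m \<ge> 2"
    and "length x = n" and "set x \<subseteq> {0..<q}"
    and "RCD_root c m x"
    and "k \<ge> 3*m - 3"
    and "1 \<le> i" and "i + k - 1 \<le> n"
    and "y = RCdup c k i x"
  shows "substr y (i + k) (i + 2*k - 1) = revcomp c (substr y i (i + k - 1))
         \<and> (\<forall>j. 1 \<le> j \<and> j < i \<longrightarrow>
              substr y (j + k) (j + 2*k - 1) \<noteq> revcomp c (substr y j (j + k - 1)))"
proof -
  note comp = assms(3)[unfolded is_complement_def]
  have kpos: "k \<ge> 1" using assms(4,8) by linarith
  define v where "v = substr x i (i + k - 1)"
  have v: "v = take k (drop (i-1) x)" unfolding v_def
    using substr_len[of i k x] assms by simp
  have lv: "length v = k" using v assms by simp
  have ydef: "y = take (i-1) x @ v @ revcomp c v @ drop (i+k-1) x"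
    using assms(11) unfolding RCdup_def v_def by simp
  have ly: "length y = n + k" using ydef lv assms by (simp add: revcomp_def)
  have yq: "\<forall>a\<in>set y. a < q"
  proof -
    have "set v \<subseteq> set x" using v by (meson set_drop_subset set_take_subset subset_trans)
    then show ?thesis using ydef assms(6) comp by (auto simp: revcomp_def dest: in_set_takeD in_set_dropD)
  qed
  have yx: "y!p = x!p" if "p < i - 1 + k" for p
  proof -
    have "take (i-1+k) y = take (i-1) x @ v" using ydef lv assms by simp
    also have "\<dots> = take (i-1+k) x" using v by (simp only: take_add)
    finally show ?thesis using that by (metis nth_take)
  qed
  have part1: "substr y (i + k) (i + 2*k - 1) = revcomp c (substr y i (i + k - 1))"
  proof -
    have "substr y (i + k) (i + 2*k - 1) = take k (drop (i-1+k) y)"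
    proof -
      have "i + 2*k - 1 = i + k + k - 1" by simp
      then show ?thesis using substr_len[of "i+k" k y] assms ly by simp
    qed
    also have "\<dots> = revcomp c v" using ydef lv assms by (simp add: revcomp_def)
    finally have a1: "substr y (i + k) (i + 2*k - 1) = revcomp c v" .
    have "substr y i (i + k - 1) = take k (drop (i-1) y)"
      using substr_len[of i k y] assms ly by simp
    also have "\<dots> = v" using ydef lv assms by simp
    finally show ?thesis using a1 by simp
  qed
  have part2: "substr y (j + k) (j + 2*k - 1) \<noteq> revcomp c (substr y j (j + k - 1))"
    if j: "1 \<le> j" "j < i" for j
  proof
    assume A0: "substr y (j + k) (j + 2*k - 1) = revcomp c (substr y j (j + k - 1))"
    have A: "\<forall>s<k. y!(j-1+k+s) = c (y!(j-1+k-1-s))"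
      using pal_iff[of j k y c] A0 j assms ly by simp
    have B: "\<forall>s<k. y!(i-1+k+s) = c (y!(i-1+k-1-s))"
      using pal_iff[of i k y c] part1 assms ly by simp
    have invo: "c (c (y!p)) = y!p" if "p < n + k" for p
      using yq comp that ly by (metis nth_mem)
    have symA: "y!b = c (y!a)" if "j-1 \<le> a" "j-1 \<le> b" "a + b = 2*(j-1+k) - 1" for a b
    proof (cases "b \<ge> j-1+k")
      case True
      have e1: "b - (j-1+k) < k" "j-1+k+(b-(j-1+k)) = b" "j-1+k-1-(b-(j-1+k)) = a"
        using True that j kpos assms(9) by auto
      show ?thesis using A[rule_format, OF e1(1)] unfolding e1(2,3) .
    next
      case False
      have e1: "a - (j-1+k) < k" "j-1+k+(a-(j-1+k)) = a" "j-1+k-1-(a-(j-1+k)) = b"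
        using False that j kpos assms(9) by auto
      have "y!a = c (y!b)" using A[rule_format, OF e1(1)] unfolding e1(2,3) .
      moreover have "b < n + k" using False j assms by simp
      ultimately show ?thesis using invo by simp
    qed
    have symB: "y!b = c (y!a)" if "i-1 \<le> a" "i-1 \<le> b" "a + b = 2*(i-1+k) - 1" for a b
    proof (cases "b \<ge> i-1+k")
      case True
      have e1: "b - (i-1+k) < k" "i-1+k+(b-(i-1+k)) = b" "i-1+k-1-(b-(i-1+k)) = a"
        using True that j kpos assms(9) by auto
      show ?thesis using B[rule_format, OF e1(1)] unfolding e1(2,3) .
    next
      case False
      have e1: "a - (i-1+k) < k" "i-1+k+(a-(i-1+k)) = a" "i-1+k-1-(a-(i-1+k)) = b"
        using False that j kpos assms(9) by auto
      have "y!a = c (y!b)" using B[rule_format, OF e1(1)] unfolding e1(2,3) .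
      moreover have "b < n + k" using False j assms by simp
      ultimately show ?thesis using invo by simp
    qed
    define d where "d = i - j"
    have d: "d \<ge> 1" "i = j + d" using j d_def by auto
    have per: "y!(p+2*d) = y!p" if "j-1 \<le> p" "p + d \<le> j+2*k-2" for p
    proof -
      define b where "b = 2*(j-1+k) - 1 - p"
      have "y!b = c (y!p)" using symA[of p b] that b_def j d by simp
      moreover have "y!(p+2*d) = c (y!b)" using symB[of b "p+2*d"] that b_def j d by simp
      moreover have "p < n + k" using that d assms by simp
      ultimately show ?thesis using invo by simp
    qed
    have iter: "\<forall>p. j-1 \<le> p \<longrightarrow> p + 2*d*t' \<le> j+2*k-2+d \<longrightarrow> y!(p+2*d*t') = y!p" for t'
    proof (induction t')
      case 0 then show ?case by simp
    next
      case (Suc t')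
      show ?case
      proof (intro allI impI)
        fix p assume h: "j-1 \<le> p" "p + 2*d*Suc t' \<le> j+2*k-2+d"
        have "y!(p+2*d*Suc t') = y!((p+2*d*t') + 2*d)" by (simp add: algebra_simps)
        also have "\<dots> = y!(p+2*d*t')" using per[of "p+2*d*t'"] h by simp
        also have "\<dots> = y!p" using Suc h by simp
        finally show "y!(p+2*d*Suc t') = y!p" .
      qed
    qed
    define t where "t = (m-1) div d"
    have t1: "t*d \<le> m-1" unfolding t_def by (rule div_times_less_eq_dividend)
    have t2: "m-1 < (t+1)*d"
    proof -
      have h1: "t * d + (m-1) mod d = m-1" unfolding t_def by (rule div_mult_mod_eq)
      have h2: "(m-1) mod d < d" using d(1) by simp
      have h3: "(t+1)*d = t*d + d" by simp
      show ?thesis using h1 h2 h3 by linarith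
    qed
    have km: "k \<ge> 2*m - 1" using assms(4,8) by linarith
    define e where "e = j-1+k-t*d"
    define T where "T = t*d"
    have T2: "2*d*t = 2*T" unfolding T_def by simp
    define J where "J = j - 1"
    have jJ: "j = J + 1" using j(1) unfolding J_def by simp
    have iJ: "i = J + 1 + d" using jJ d(2) by simp
    have T1: "T + 1 \<le> m" using t1 assms(4) unfolding T_def by linarith
    have T3: "m \<le> T + d" using t2 assms(4) unfolding T_def by (simp add: algebra_simps)
    have km2: "2*m \<le> k+1" using km assms(4) by linarith
    have eJ: "e + T = J + k" unfolding e_def J_def T_def[symmetric] using T1 km2 by simp
    have em: "e \<ge> m" using eJ T1 km2 by linarith
    have key: "x!(e+s) = c (x!(e-1-s))" if "s < m" for s
    proof -
      define p where "p = e-1-s"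
      have pe: "p + 1 + s = e" unfolding p_def using em that by simp
      have g1: "J \<le> p+2*T" using pe eJ that T1 km2 by linarith
      have g2: "J \<le> e+s" using eJ T1 km2 by linarith
      have g3: "(p+2*T)+(e+s) + 1 = 2*(J+k)" using pe eJ by presburger
      have g4: "J \<le> p" using pe eJ T1 km2 that by linarith
      have g5: "p + 2*T \<le> J+1+2*k-2+d" using pe eJ T1 km2 that by linarith
      have g6: "e + s < J + d + k" using eJ T3 that by linarith
      have f3: "(p+2*T)+(e+s) = 2*(j-1+k)-1" using g3 jJ by simp
      have "y!(e+s) = c (y!(p+2*T))"
        using symA[of "p+2*T" "e+s"] g1 g2 f3 jJ by simp
      also have "y!(p+2*T) = y!p"
        using iter[of t] g4 g5 T2 jJ by simp
      finally have "y!(e+s) = c (y!(e-1-s))" using p_def by simp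
      then show ?thesis using yx g6 iJ by simp
    qed
    have P1: "1 \<le> e - m + 1" by simp
    have P2: "e - m + 1 + 2*m - 1 \<le> length x" using eJ T3 em iJ assms(5,10) by linarith
    have "substr x (e-m+1+m) (e-m+1+2*m-1) = revcomp c (substr x (e-m+1) (e-m+1+m-1))"
    proof -
      have h: "e-m+1-1+m = e" "e-m+1-1+m-1 = e-1" using em assms(4) by auto
      show ?thesis using pal_iff[OF P1 P2, of c] key unfolding h by simp
    qed
    moreover have "substr x (e-m+1+m) (e-m+1+2*m-1) \<noteq> revcomp c (substr x (e-m+1) (e-m+1+m-1))"
      using assms(7) P2 unfolding RCD_root_def by auto
    ultimately show False by simp
  qed
  show ?thesis using part1 part2 by blast
qed

end
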